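(* Let $(P,\le,\mu,\gamma)$ be a preordered heap with target multiplication $\tau(a,b)=\gamma(\mu(\gamma a,\gamma b))$. For $a,x\in P$ define $a/x=\tau(a,\gamma x)$ and $x\backslash a=\tau(\gamma x,a)$. Then for all $a,x,y\in P$: $y\le a/x$ if and only if $x\le y\backslash a$.
   Context: A preordered heap is a structure $(P,\le,\mu,\gamma)$ where $(P,\le)$ is a preorder (reflexive and transitive relation); $\mu\colon P\times P\to P$ (source multiplication) is monotonic in both arguments; $\gamma\colon P\to P$ (involution) is antitone ($a\le b\Rightarrow \gamma b\le\gamma a$); and the following axioms hold: (A1) $\gamma(\gamma(a))=a$ for all $a$; (A2a) $\mu(a,\gamma(\mu(\gamma b,a)))\le b$ for all $a,b\in P$; (A2b) $\mu(\gamma(\mu(a,\gamma b)),a)\le b$ for all $a,b\in P$. *)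

theory Defs
  imports Main
begin

definition preordered_heap ::
  "('a \<Rightarrow> 'a \<Rightarrow> bool) \<Rightarrow> ('a \<Rightarrow> 'a \<Rightarrow> 'a) \<Rightarrow> ('a \<Rightarrow> 'a) \<Rightarrow> bool" where
  "preordered_heap le mu gamma \<longleftrightarrow>
     (\<forall>a. le a a) \<and>
     (\<forall>a b c. le a b \<longrightarrow> le b c \<longrightarrow> le a c) \<and>
     (\<forall>a a' b b'. le a a' \<longrightarrow> le b b' \<longrightarrow> le (mu a b) (mu a' b')) \<and>
     (\<forall>a b. le a b \<longrightarrow> le (gamma b) (gamma a)) \<and>
     (\<forall>a. gamma (gamma a) = a) \<and>
     (\<forall>a b. le (mu a (gamma (mu (gamma b) a))) b) \<and>
     (\<forall>a b. le (mu (gamma (mu a (gamma b))) a) b)"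

definition target_mult :: "('a \<Rightarrow> 'a \<Rightarrow> 'a) \<Rightarrow> ('a \<Rightarrow> 'a) \<Rightarrow> 'a \<Rightarrow> 'a \<Rightarrow> 'a" where
  "target_mult mu gamma a b = gamma (mu (gamma a) (gamma b))"

definition rdiv :: "('a \<Rightarrow> 'a \<Rightarrow> 'a) \<Rightarrow> ('a \<Rightarrow> 'a) \<Rightarrow> 'a \<Rightarrow> 'a \<Rightarrow> 'a" where
  "rdiv mu gamma a x = target_mult mu gamma a (gamma x)"

definition ldiv :: "('a \<Rightarrow> 'a \<Rightarrow> 'a) \<Rightarrow> ('a \<Rightarrow> 'a) \<Rightarrow> 'a \<Rightarrow> 'a \<Rightarrow> 'a" where
  "ldiv mu gamma x a = target_mult mu gamma (gamma x) a"

end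

theory Submission
  imports Defs
begin

theorem mainTheorem2:
  fixes le :: "'a \<Rightarrow> 'a \<Rightarrow> bool" and mu :: "'a \<Rightarrow> 'a \<Rightarrow> 'a" and gamma :: "'a \<Rightarrow> 'a"
  assumes "preordered_heap le mu gamma"
  shows "\<forall>a x y. le y (rdiv mu gamma a x) \<longleftrightarrow> le x (ldiv mu gamma y a)"
proof (intro allI iffI)
  note H = assms[unfolded preordered_heap_def]
  have refl: "\<And>a. le a a" and tr: "\<And>a b c. le a b \<Longrightarrow> le b c \<Longrightarrow> le a c"
    and mono: "\<And>a a' b b'. le a a' \<Longrightarrow> le b b' \<Longrightarrow> le (mu a b) (mu a' b')"
    and anti: "\<And>a b. le a b \<Longrightarrow> le (gamma b) (gamma a)"
    and inv: "\<And>a. gamma (gamma a) = a"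
    and A2a: "\<And>a b. le (mu a (gamma (mu (gamma b) a))) b"
    and A2b: "\<And>a b. le (mu (gamma (mu a (gamma b))) a) b"
    using H by blast+
  fix a x y
  {
    assume h: "le y (rdiv mu gamma a x)"
    hence "le y (gamma (mu (gamma a) x))" by (simp add: rdiv_def target_mult_def inv)
    hence "le (mu y (gamma a)) (mu (gamma (mu (gamma a) x)) (gamma a))" using mono refl by blast
    moreover have "le (mu (gamma (mu (gamma a) (gamma (gamma x)))) (gamma a)) (gamma x)" by (rule A2b)
    ultimately have "le (mu y (gamma a)) (gamma x)" using tr inv by metis
    hence "le x (gamma (mu y (gamma a)))" using anti inv by metis
    thus "le x (ldiv mu gamma y a)" by (simp add: ldiv_def target_mult_def inv)
  }
  {
    assume h: "le x (ldiv mu gamma y a)"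
    hence "le x (gamma (mu y (gamma a)))" by (simp add: ldiv_def target_mult_def inv)
    hence "le (mu (gamma a) x) (mu (gamma a) (gamma (mu y (gamma a))))" using mono refl by blast
    moreover have "le (mu (gamma a) (gamma (mu (gamma (gamma y)) (gamma a)))) (gamma y)" by (rule A2a)
    ultimately have "le (mu (gamma a) x) (gamma y)" using tr inv by metis
    hence "le y (gamma (mu (gamma a) x))" using anti inv by metis
    thus "le y (rdiv mu gamma a x)" by (simp add: rdiv_def target_mult_def inv)
  }
qed

end
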